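(* Let $\operatorname{R}_4=\{a_0,a_1,a_2,a_3\}$ be the dihedral quandle of order $4$, with $a_ia_j=a_{2j-i \pmod 4}$. Then the quandle ring $\mathbb{Z}[\operatorname{R}_4]$ contains a unique maximal quandle, namely $$M=\Big\{t\big(a_0+\alpha(a_2-a_0)\big)+(1-t)\big(a_1+\beta(a_3-a_1)\big)~|~t\in\{0,1\},~\alpha,\beta\in\mathbb{Z}\Big\}.$$
   Context: A quandle is a non-empty set with a binary operation $(x,y)\mapsto xy$ such that $xx=x$; for all $x,y$ there is a unique $z$ with $x=zy$; and $(xy)z=(xz)(yz)$. For a quandle $Q$, the quandle ring $\mathbb{Z}[Q]$ is the free abelian group with basis $Q$, with multiplication $\big(\sum_i\alpha_i q_i\big)\big(\sum_j\beta_j q_j\big)=\sum_{i,j}\alpha_i\beta_j (q_iq_j)$. A quandle in $\mathbb{Z}[Q]$ is a subset closed under the ring multiplication which is a quandle under the restricted multiplication; a maximal quandle is a non-zero quandle in $\mathbb{Z}[Q]$ (i.e. not equal to $\{0\}$) not properly contained in any other quandle in $\mathbb{Z}[Q]$. *)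

theory Defs
  imports Main "HOL-Library.Numeral_Type"
begin

definition is_quandle_in :: "('a \<Rightarrow> 'a \<Rightarrow> 'a) \<Rightarrow> 'a set \<Rightarrow> bool" where
  "is_quandle_in op Q \<longleftrightarrow>
     Q \<noteq> {} \<and>
     (\<forall>x\<in>Q. \<forall>y\<in>Q. op x y \<in> Q) \<and>
     (\<forall>x\<in>Q. op x x = x) \<and>
     (\<forall>x\<in>Q. \<forall>y\<in>Q. \<exists>!z. z \<in> Q \<and> x = op z y) \<and>
     (\<forall>x\<in>Q. \<forall>y\<in>Q. \<forall>z\<in>Q. op (op x y) z = op (op x z) (op y z))"

definition r4_op :: "4 \<Rightarrow> 4 \<Rightarrow> 4" where
  "r4_op i j = 2 * j - i"

text \<open>The quandle ring Z[R_4]: free abelian group with basis R_4, i.e. functions 4 \<Rightarrow> int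
  (coefficient of each basis element), with bilinear extension of the quandle operation.\<close>
type_synonym zr4 = "4 \<Rightarrow> int"

definition zr4_mult :: "zr4 \<Rightarrow> zr4 \<Rightarrow> zr4" where
  "zr4_mult f g = (\<lambda>k. \<Sum>i\<in>UNIV. \<Sum>j\<in>UNIV. if r4_op i j = k then f i * g j else 0)"

definition bas :: "4 \<Rightarrow> zr4" where
  "bas i = (\<lambda>k. if k = i then 1 else 0)"

definition maximal_quandle_zr4 :: "zr4 set \<Rightarrow> bool" where
  "maximal_quandle_zr4 Q \<longleftrightarrow>
     is_quandle_in zr4_mult Q \<and> Q \<noteq> {(\<lambda>_. 0)} \<and>
     \<not> (\<exists>Q'. is_quandle_in zr4_mult Q' \<and> Q \<subset> Q')"

end

theory Submission
  imports Defs
begin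
lemma U4: "(UNIV::4 set) = {0,1,2,3}"
proof -
  have "x \<in> {0,1,2,3}" for x :: 4
  proof (induct x)
    case (of_int z)
    then have "z = 0 \<or> z = 1 \<or> z = 2 \<or> z = 3" by auto
    then show ?case by auto
  qed
  then show ?thesis by auto
qed
lemma zr4_eq: "(x::zr4) = y \<longleftrightarrow> x 0 = y 0 \<and> x 1 = y 1 \<and> x 2 = y 2 \<and> x 3 = y 3"
proof
  assume asm: "x 0 = y 0 \<and> x 1 = y 1 \<and> x 2 = y 2 \<and> x 3 = y 3"
  show "x = y"
  proof (rule ext)
    fix k :: 4
    have "k \<in> {0,1,2,3}" using U4 by blast
    then show "x k = y k" using asm by auto
  qed
qed simp
lemma m0: "zr4_mult x y 0 = (y 0 + y 2) * x 0 + (y 1 + y 3) * x 2"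
  unfolding zr4_mult_def r4_op_def U4 by (simp add: algebra_simps)
lemma m1: "zr4_mult x y 1 = (y 0 + y 2) * x 3 + (y 1 + y 3) * x 1"
  unfolding zr4_mult_def r4_op_def U4 by (simp add: algebra_simps)
lemma m2: "zr4_mult x y 2 = (y 0 + y 2) * x 2 + (y 1 + y 3) * x 0"
  unfolding zr4_mult_def r4_op_def U4 by (simp add: algebra_simps)
lemma m3: "zr4_mult x y 3 = (y 0 + y 2) * x 1 + (y 1 + y 3) * x 3"
  unfolding zr4_mult_def r4_op_def U4 by (simp add: algebra_simps)

definition ev :: "int \<Rightarrow> zr4" where
  "ev a = (\<lambda>k. if k = 0 then 1 - a else if k = 2 then a else 0)"
definition od :: "int \<Rightarrow> zr4" where
  "od a = (\<lambda>k. if k = 1 then 1 - a else if k = 3 then a else 0)"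

lemma ev_c [simp]: "ev a 0 = 1 - a" "ev a 1 = 0" "ev a 2 = a" "ev a 3 = 0"
  by (simp_all add: ev_def)
lemma od_c [simp]: "od a 0 = 0" "od a 1 = 1 - a" "od a 2 = 0" "od a 3 = a"
  by (simp_all add: od_def)

lemma ev_inj [simp]: "ev a = ev b \<longleftrightarrow> a = b" by (simp add: zr4_eq)
lemma od_inj [simp]: "od a = od b \<longleftrightarrow> a = b" by (simp add: zr4_eq)
lemma ev_od [simp]: "ev a \<noteq> od b" "od b \<noteq> ev a" by (simp_all add: zr4_eq)

lemma mult_simps [simp]:
  "zr4_mult (ev a) (ev b) = ev a"
  "zr4_mult (ev a) (od b) = ev (1 - a)"
  "zr4_mult (od a) (ev b) = od (1 - a)"
  "zr4_mult (od a) (od b) = od a"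
  by (simp_all add: zr4_eq m0 m1 m2 m3)

definition MM :: "zr4 set" where "MM = range ev \<union> range od"

lemma MM_quandle: "is_quandle_in zr4_mult MM"
  unfolding is_quandle_in_def
proof (intro conjI)
  show "MM \<noteq> {}" unfolding MM_def by auto
  show "\<forall>x\<in>MM. \<forall>y\<in>MM. zr4_mult x y \<in> MM" unfolding MM_def by auto
  show "\<forall>x\<in>MM. zr4_mult x x = x" unfolding MM_def by auto
  show "\<forall>x\<in>MM. \<forall>y\<in>MM. \<forall>z\<in>MM. zr4_mult (zr4_mult x y) z = zr4_mult (zr4_mult x z) (zr4_mult y z)"
    unfolding MM_def by auto
  show "\<forall>x\<in>MM. \<forall>y\<in>MM. \<exists>!z. z \<in> MM \<and> x = zr4_mult z y"
  proof (intro ballI)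
    fix x y assume x: "x \<in> MM" and y: "y \<in> MM"
    have inv: "zr4_mult (zr4_mult z y) y = z" if "z \<in> MM" for z
      using that y unfolding MM_def by auto
    have cl: "zr4_mult x y \<in> MM" using x y unfolding MM_def by auto
    show "\<exists>!z. z \<in> MM \<and> x = zr4_mult z y"
    proof (rule ex1I[of _ "zr4_mult x y"])
      show "zr4_mult x y \<in> MM \<and> x = zr4_mult (zr4_mult x y) y" using cl inv x by auto
      fix z assume "z \<in> MM \<and> x = zr4_mult z y"
      then show "z = zr4_mult x y" using inv by auto
    qed
  qed
qed

lemma idem:
  assumes "zr4_mult x x = x" "x \<noteq> (\<lambda>_. 0)"
  shows "x \<in> MM"
proof -
  define e where "e = x 0 + x 2"
  define p where "p = x 1 + x 3"
  have E0: "e * x 0 + p * x 2 = x 0" using assms(1) m0[of x x] unfolding e_def p_def by simp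
  have E1: "e * x 3 + p * x 1 = x 1" using assms(1) m1[of x x] unfolding e_def p_def by simp
  have E2: "e * x 2 + p * x 0 = x 2" using assms(1) m2[of x x] unfolding e_def p_def by simp
  have E3: "e * x 1 + p * x 3 = x 3" using assms(1) m3[of x x] unfolding e_def p_def by simp
  have "e * e + p * e = e" using E0 E2 unfolding e_def by (simp add: algebra_simps)
  then have F1: "e * (e + p - 1) = 0" by (simp add: algebra_simps)
  have "e * p + p * p = p" using E1 E3 unfolding p_def by (simp add: algebra_simps)
  then have F2: "p * (e + p - 1) = 0" by (simp add: algebra_simps)
  have eo: "e + p = 1"
  proof (rule ccontr)
    assume "e + p \<noteq> 1"
    then have "e = 0" "p = 0" using F1 F2 by auto
    then have "x 0 = 0" "x 1 = 0" "x 2 = 0" "x 3 = 0" using E0 E1 E2 E3 by auto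
    then have "x = (\<lambda>_. 0)" by (simp add: zr4_eq)
    then show False using assms(2) by simp
  qed
  have ee: "e = 1 - p" using eo by simp
  have pp: "p = 1 - e" using eo by simp
  have "p * (x 2 - x 0) = ((1 - p) * x 0 + p * x 2) - x 0" by (simp add: algebra_simps)
  also have "\<dots> = 0" using E0 ee by simp
  finally have G1: "p * (x 2 - x 0) = 0" .
  have "e * (x 3 - x 1) = (e * x 3 + (1 - e) * x 1) - x 1" by (simp add: algebra_simps)
  also have "\<dots> = 0" using E1 pp by simp
  finally have G2: "e * (x 3 - x 1) = 0" .
  consider "p = 0" | "e = 0" | "p \<noteq> 0" "e \<noteq> 0" by blast
  then show ?thesis
  proof cases
    case 1
    then have "x 3 = x 1" "e = 1" using G2 eo by auto
    then have "x 1 = 0" "x 3 = 0" using \<open>p = 0\<close> p_def by auto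
    then have "x = ev (x 2)" using \<open>e = 1\<close> e_def by (simp add: zr4_eq)
    then show ?thesis unfolding MM_def by auto
  next
    case 2
    then have "x 2 = x 0" "p = 1" using G1 eo by auto
    then have "x 0 = 0" "x 2 = 0" using \<open>e = 0\<close> e_def by auto
    then have "x = od (x 3)" using \<open>p = 1\<close> p_def by (simp add: zr4_eq)
    then show ?thesis unfolding MM_def by auto
  next
    case 3
    then have "x 2 = x 0" "x 3 = x 1" using G1 G2 by auto
    then have "2 * (x 0 + x 1) = 1" using eo e_def p_def by simp
    then have "(2::int) dvd 1" by (metis dvd_triv_left)
    then show ?thesis by simp
  qed
qed

lemma sub:
  assumes q: "is_quandle_in zr4_mult Q" and nz: "Q \<noteq> {(\<lambda>_. 0)}"
  shows "Q \<subseteq> MM"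
proof -
  have zm: "zr4_mult z (\<lambda>_. 0) = (\<lambda>_. 0)" for z by (simp add: zr4_eq m0 m1 m2 m3)
  have n0: "(\<lambda>_. 0) \<notin> Q"
  proof
    assume a: "(\<lambda>_. 0::int) \<in> Q"
    have "x = (\<lambda>_. 0)" if "x \<in> Q" for x
    proof -
      have U: "\<forall>x\<in>Q. \<forall>y\<in>Q. \<exists>!z. z \<in> Q \<and> x = zr4_mult z y"
        using q by (simp add: is_quandle_in_def)
      have "\<exists>!z. z \<in> Q \<and> x = zr4_mult z (\<lambda>_. 0)" using U that a by blast
      then obtain z where "x = zr4_mult z (\<lambda>_. 0)" by blast
      then show ?thesis using zm by simp
    qed
    then show False using a nz by blast
  qed
  show ?thesis
  proof
    fix x assume "x \<in> Q"
    then have "zr4_mult x x = x" using q by (simp add: is_quandle_in_def)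
    moreover have "x \<noteq> (\<lambda>_. 0)" using n0 \<open>x \<in> Q\<close> by auto
    ultimately show "x \<in> MM" by (rule idem)
  qed
qed

lemma Mset: "{\<lambda>k. t * (bas 0 k + \<alpha> * (bas 2 k - bas 0 k))
              + (1 - t) * (bas 1 k + \<beta> * (bas 3 k - bas 1 k)) |
          t \<alpha> \<beta>. t \<in> {0, 1::int}} = MM" (is "?S = MM")
proof
  show "MM \<subseteq> ?S"
  proof
    fix x assume "x \<in> MM"
    then consider a where "x = ev a" | a where "x = od a" unfolding MM_def by auto
    then show "x \<in> {\<lambda>k. t * (bas 0 k + \<alpha> * (bas 2 k - bas 0 k))
              + (1 - t) * (bas 1 k + \<beta> * (bas 3 k - bas 1 k)) |
          t \<alpha> \<beta>. t \<in> {0, 1::int}}"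
    proof cases
      case 1
      then show ?thesis by (intro CollectI exI[of _ 1] exI[of _ a] exI[of _ 0]) (simp add: zr4_eq bas_def)
    next
      case 2
      then show ?thesis by (intro CollectI exI[of _ 0] exI[of _ 0] exI[of _ a]) (simp add: zr4_eq bas_def)
    qed
  qed
next
  show "?S \<subseteq> MM"
  proof
    fix x assume "x \<in> {\<lambda>k. t * (bas 0 k + \<alpha> * (bas 2 k - bas 0 k))
              + (1 - t) * (bas 1 k + \<beta> * (bas 3 k - bas 1 k)) |
          t \<alpha> \<beta>. t \<in> {0, 1::int}}"
    then obtain t a b where t: "t \<in> {0,1::int}" and x: "x = (\<lambda>k. t * (bas 0 k + a * (bas 2 k - bas 0 k))
              + (1 - t) * (bas 1 k + b * (bas 3 k - bas 1 k)))" by blast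
    from t consider "t = 0" | "t = 1" by blast
    then show "x \<in> MM"
    proof cases
      case 1
      then have "x = od b" using x by (simp add: zr4_eq bas_def)
      then show ?thesis unfolding MM_def by auto
    next
      case 2
      then have "x = ev a" using x by (simp add: zr4_eq bas_def)
      then show ?thesis unfolding MM_def by auto
    qed
  qed
qed

theorem theorem5p3:
  "\<forall>Q. maximal_quandle_zr4 Q \<longleftrightarrow>
     Q = {\<lambda>k. t * (bas 0 k + \<alpha> * (bas 2 k - bas 0 k))
              + (1 - t) * (bas 1 k + \<beta> * (bas 3 k - bas 1 k)) |
          t \<alpha> \<beta>. t \<in> {0, 1::int}}"
  unfolding Mset
proof (intro allI iffI)
  have e0: "ev 0 \<in> MM" unfolding MM_def by auto
  have e0n: "ev 0 \<noteq> (\<lambda>_. 0)" by (simp add: zr4_eq)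
  fix Q
  show "maximal_quandle_zr4 Q \<Longrightarrow> Q = MM"
  proof -
    assume m: "maximal_quandle_zr4 Q"
    then have "Q \<subseteq> MM" using sub unfolding maximal_quandle_zr4_def by blast
    then show "Q = MM" using m MM_quandle unfolding maximal_quandle_zr4_def by blast
  qed
  show "Q = MM \<Longrightarrow> maximal_quandle_zr4 Q"
  proof -
    assume Q: "Q = MM"
    have "MM \<noteq> {(\<lambda>_. 0)}" using e0 e0n by blast
    moreover have "\<not> (\<exists>Q'. is_quandle_in zr4_mult Q' \<and> MM \<subset> Q')"
    proof
      assume "\<exists>Q'. is_quandle_in zr4_mult Q' \<and> MM \<subset> Q'"
      then obtain Q' where q: "is_quandle_in zr4_mult Q'" "MM \<subset> Q'" by blast
      have "Q' \<noteq> {(\<lambda>_. 0)}" using q(2) e0 e0n by blast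
      then have "Q' \<subseteq> MM" using sub q(1) by blast
      then show False using q(2) by blast
    qed
    ultimately show "maximal_quandle_zr4 Q" using Q MM_quandle unfolding maximal_quandle_zr4_def by blast
  qed
qed
end
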